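(* Every Gibonacci sequence $\{G_n(a,b)\}$ (with $a,b\in\mathbb{Z}$, $\gcd(a,b)=1$) is complete mod $14$ (and hence also mod $2$ and mod $7$).
   Context: For integers $a,b$ with $\gcd(a,b)=1$, the Gibonacci sequence $\{G_n(a,b)\}_{n\ge1}$ is defined by $G_1=a$, $G_2=b$, $G_{n+1}=G_{n-1}+G_n$. A sequence is complete mod $m$ if every residue class modulo $m$ contains some term of the sequence. *)

theory Defs
  imports Main
begin

text \<open>Gibonacci sequence G_n(a,b), indexed from n = 1: G_1 = a, G_2 = b,
  G_{n+1} = G_{n-1} + G_n. We use 0-based shifted function gib a b k = G_{k+1}.\<close>
fun gib0 :: "int \<Rightarrow> int \<Rightarrow> nat \<Rightarrow> int" where
  "gib0 a b 0 = a"
| "gib0 a b (Suc 0) = b"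
| "gib0 a b (Suc (Suc k)) = gib0 a b k + gib0 a b (Suc k)"

definition G :: "int \<Rightarrow> int \<Rightarrow> nat \<Rightarrow> int" where
  "G a b n = gib0 a b (n - 1)"

definition complete_mod :: "(nat \<Rightarrow> int) \<Rightarrow> int \<Rightarrow> bool" where
  "complete_mod s m \<longleftrightarrow> (\<forall>r::int. \<exists>n\<ge>1. s n mod m = r mod m)"

end

theory Submission
  imports Defs
begin

fun ff :: "nat \<Rightarrow> int" where
  "ff 0 = 0" | "ff (Suc 0) = 1" | "ff (Suc (Suc n)) = ff n + ff (Suc n)"

lemma lin: "gib0 a b (k + Suc n) = ff n * gib0 a b k + ff (Suc n) * gib0 a b (Suc k)"
proof (induction n rule: ff.induct)
  case 1 then show ?case by simp
next
  case 2 then show ?case by simp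
next
  case (3 n)
  have "gib0 a b (k + Suc (Suc (Suc n))) = gib0 a b (k + Suc n) + gib0 a b (k + Suc (Suc n))"
    by (simp add: add_Suc_right)
  also have "\<dots> = ff (Suc (Suc n)) * gib0 a b k + ff (Suc (Suc (Suc n))) * gib0 a b (Suc k)"
    using 3 by (simp add: algebra_simps)
  finally show ?case .
qed

lemma ff15: "ff 15 = 610" and ff16: "ff 16 = 987" and ff2: "ff 2 = 1" and ff3: "ff 3 = 2"
  by (simp_all add: eval_nat_numeral)

lemma per2: "gib0 a b (k + 3) mod 2 = gib0 a b k mod 2"
proof -
  have "gib0 a b (k + 3) = gib0 a b k + 2 * gib0 a b (Suc k)"
    using lin[of a b k 2] by (simp add: ff2 ff3)
  thus ?thesis by simp
qed

lemma per7: "gib0 a b (k + 16) mod 7 = gib0 a b k mod 7"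
proof -
  have "gib0 a b (k + 16) = 610 * gib0 a b k + 987 * gib0 a b (Suc k)"
    using lin[of a b k 15] by (simp add: ff15 ff16)
  hence "gib0 a b (k + 16) = gib0 a b k + 7 * (87 * gib0 a b k + 141 * gib0 a b (Suc k))" by (simp add: algebra_simps)
  then show ?thesis by (simp only: mod_mult_self2)
qed

lemma per2m: "gib0 a b (k + 3 * m) mod 2 = gib0 a b k mod 2"
proof (induction m)
  case 0 then show ?case by simp
next
  case (Suc m)
  have "gib0 a b (k + 3 * Suc m) mod 2 = gib0 a b (k + 3 * m + 3) mod 2" by (simp add: algebra_simps)
  also have "\<dots> = gib0 a b (k + 3 * m) mod 2" by (rule per2)
  finally show ?case using Suc by simp
qed

lemma per7m: "gib0 a b (k + 16 * m) mod 7 = gib0 a b k mod 7"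
proof (induction m)
  case 0 then show ?case by simp
next
  case (Suc m)
  have "gib0 a b (k + 16 * Suc m) mod 7 = gib0 a b (k + 16 * m + 16) mod 7" by (simp add: algebra_simps)
  also have "\<dots> = gib0 a b (k + 16 * m) mod 7" by (rule per7)
  finally show ?case using Suc by simp
qed

fun gl :: "int \<Rightarrow> int \<Rightarrow> nat \<Rightarrow> int list" where
  "gl x y 0 = []"
| "gl x y (Suc n) = x # gl y ((x+y) mod 7) n"

lemma gl_len: "length (gl x y n) = n"
  by (induction n arbitrary: x y) auto

lemma gl_nth:
  "i < n \<Longrightarrow> gl (gib0 a b k mod 7) (gib0 a b (Suc k) mod 7) n ! i = gib0 a b (k+i) mod 7"
proof (induction n arbitrary: k i)
  case 0 then show ?case by simp
next
  case (Suc n)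
  show ?case
  proof (cases i)
    case 0 then show ?thesis by simp
  next
    case (Suc j)
    have e: "(gib0 a b k mod 7 + gib0 a b (Suc k) mod 7) mod 7 = gib0 a b (Suc (Suc k)) mod 7"
      by (simp add: mod_add_eq)
    have "gl (gib0 a b k mod 7) (gib0 a b (Suc k) mod 7) (Suc n) ! i
        = gl (gib0 a b (Suc k) mod 7) (gib0 a b (Suc (Suc k)) mod 7) n ! j"
      using Suc e by simp
    also have "\<dots> = gib0 a b (Suc k + j) mod 7"
    proof -
      have jn: "j < n" using Suc.prems Suc by simp
      show ?thesis by (rule Suc.IH[OF jn])
    qed
    finally show ?thesis using Suc by simp
  qed
qed

lemma gl_num: "gl x y (numeral n) = x # gl y ((x+y) mod 7) (pred_numeral n)"
  by (simp add: numeral_eq_Suc)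

lemma r7: "(0::int) \<le> x \<Longrightarrow> x < 7 \<Longrightarrow> x = 0 \<or> x = 1 \<or> x = 2 \<or> x = 3 \<or> x = 4 \<or> x = 5 \<or> x = 6"
  by arith

lemma check:
  assumes "0 \<le> x" "x < 7" "0 \<le> y" "y < 7" "\<not>(x = 0 \<and> y = 0)" "0 \<le> r" "r < 7"
  shows "r \<in> set (gl x y 16)"
proof -
  have s: "set [0..6] \<subseteq> set (gl x y 16)"
    using r7[OF assms(1,2)] r7[OF assms(3,4)] assms(5)
    by (elim disjE; simp add: gl_num upto.simps)
  show ?thesis using s r7[OF assms(6,7)] by (auto simp: upto.simps)
qed

lemma gib_mod: "gib0 a b k mod 7 = gib0 (a mod 7) (b mod 7) k mod 7"
proof (induction a b k rule: gib0.induct)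
  case (3 a b k)
  have "gib0 a b (Suc (Suc k)) mod 7 = (gib0 a b k mod 7 + gib0 a b (Suc k) mod 7) mod 7"
    by (simp add: mod_add_eq)
  also have "\<dots> = (gib0 (a mod 7) (b mod 7) k mod 7 + gib0 (a mod 7) (b mod 7) (Suc k) mod 7) mod 7"
    by (simp only: 3)
  also have "\<dots> = gib0 (a mod 7) (b mod 7) (Suc (Suc k)) mod 7"
    by (simp add: mod_add_eq)
  finally show ?case .
qed auto

lemma complete7:
  fixes a b :: int
  assumes "gcd a b = 1"
  shows "\<exists>j<16. gib0 a b j mod 7 = t mod 7"
proof -
  define x where "x = a mod 7"
  define y where "y = b mod 7"
  have xr: "0 \<le> x" "x < 7" "0 \<le> y" "y < 7" "0 \<le> t mod 7" "t mod 7 < 7"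
    unfolding x_def y_def by auto
  have n7: "\<not>(x = 0 \<and> y = 0)"
  proof
    assume "x = 0 \<and> y = 0"
    hence "7 dvd a" "7 dvd b" unfolding x_def y_def by auto
    hence "7 dvd gcd a b" by simp
    with assms show False by simp
  qed
  from check[OF xr(1-4) n7 xr(5,6)] have "t mod 7 \<in> set (gl x y 16)" .
  then obtain i where i: "i < 16" "gl x y 16 ! i = t mod 7"
    by (auto simp: in_set_conv_nth gl_len)
  have "gl x y 16 ! i = gib0 x y (0+i) mod 7"
    using gl_nth[of i 16 x y 0] i x_def y_def by simp
  hence "gib0 a b i mod 7 = t mod 7" using i gib_mod[of a b i] x_def y_def by simp
  with i show ?thesis by blast
qed

lemma complete2:
  fixes a b :: int
  assumes "gcd a b = 1"
  shows "\<exists>i<3. gib0 a b i mod 2 = s mod 2"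
proof -
  have ne: "\<not>(even a \<and> even b)"
  proof
    assume "even a \<and> even b"
    hence "2 dvd gcd a b" by simp
    with assms show False by simp
  qed
  have g: "gib0 a b 0 = a" "gib0 a b 1 = b" "gib0 a b 2 = a + b" by (simp_all add: numeral_eq_Suc)
  have ne': "\<not>(a mod 2 = 0 \<and> b mod 2 = 0)" using ne by (simp add: even_iff_mod_2_eq_zero)
  have a2: "a mod 2 = 0 \<or> a mod 2 = 1" by auto
  have b2: "b mod 2 = 0 \<or> b mod 2 = 1" by auto
  have s2: "s mod 2 = 0 \<or> s mod 2 = 1" by auto
  have ab: "(a + b) mod 2 = (a mod 2 + b mod 2) mod 2" by (simp add: mod_add_eq)
  have "a mod 2 = s mod 2 \<or> b mod 2 = s mod 2 \<or> (a + b) mod 2 = s mod 2"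
    using a2 b2 s2 ne' unfolding ab by (elim disjE) simp_all
  hence "gib0 a b 0 mod 2 = s mod 2 \<or> gib0 a b 1 mod 2 = s mod 2 \<or> gib0 a b 2 mod 2 = s mod 2"
    unfolding g .
  then show ?thesis
  proof (elim disjE)
    assume "gib0 a b 0 mod 2 = s mod 2" thus ?thesis by (intro exI[of _ 0]) simp
  next
    assume "gib0 a b 1 mod 2 = s mod 2" thus ?thesis by (intro exI[of _ 1]) simp
  next
    assume "gib0 a b 2 mod 2 = s mod 2" thus ?thesis by (intro exI[of _ 2]) simp
  qed
qed

lemma complete14:
  fixes a b :: int
  assumes "gcd a b = 1"
  shows "\<exists>k. gib0 a b k mod 14 = r mod 14"
proof -
  obtain i where i: "i < 3" "gib0 a b i mod 2 = r mod 2" using complete2[OF assms] by blast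
  obtain j where j: "gib0 a b j mod 7 = r mod 7" using complete7[OF assms] by blast
  define m where "m = (i + 3 - j mod 3) mod 3"
  define k where "k = j + 16 * m"
  have k1: "k = (j + m) + 3 * (5 * m)" unfolding k_def by simp
  have k2: "k mod 3 = (j mod 3 + m) mod 3"
    unfolding k1 mod_mult_self2 by (simp add: mod_add_left_eq)
  have j3: "j mod 3 < 3" by simp
  have km: "k mod 3 = i"
  proof -
    have "i = 0 \<or> i = 1 \<or> i = 2" using i(1) by auto
    moreover have "j mod 3 = 0 \<or> j mod 3 = 1 \<or> j mod 3 = 2" using j3 by auto
    ultimately show ?thesis unfolding k2 m_def by (elim disjE) simp_all
  qed
  have "gib0 a b k mod 2 = gib0 a b (i + 3 * (k div 3)) mod 2"
    using km by (metis mod_div_mult_eq mult.commute)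
  hence k2: "gib0 a b k mod 2 = r mod 2" using per2m i by simp
  have k7: "gib0 a b k mod 7 = r mod 7" unfolding k_def using per7m j by simp
  have "2 dvd (gib0 a b k - r)" using k2 by (simp add: mod_eq_dvd_iff)
  moreover have "7 dvd (gib0 a b k - r)" using k7 by (simp add: mod_eq_dvd_iff)
  ultimately have "14 dvd (gib0 a b k - r)" by presburger
  hence "gib0 a b k mod 14 = r mod 14" by (simp add: mod_eq_dvd_iff)
  thus ?thesis by blast
qed

theorem mainTheorem13:
  fixes a b :: int
  assumes "gcd a b = 1"
  shows "complete_mod (G a b) 14 \<and> complete_mod (G a b) 2 \<and> complete_mod (G a b) 7"
proof -
  have c: "\<exists>n\<ge>1. G a b n mod 14 = r mod 14" for r
  proof -
    obtain k where "gib0 a b k mod 14 = r mod 14" using complete14[OF assms] by blast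
    thus ?thesis by (intro exI[of _ "Suc k"]) (simp add: G_def)
  qed
  have d: "complete_mod (G a b) m" if "m dvd 14" for m
    unfolding complete_mod_def
  proof
    fix r
    obtain n where "n \<ge> 1" "G a b n mod 14 = r mod 14" using c by blast
    hence "G a b n mod 14 mod m = r mod 14 mod m" by simp
    hence "G a b n mod m = r mod m" using that by (simp add: mod_mod_cancel)
    thus "\<exists>n\<ge>1. G a b n mod m = r mod m" using \<open>n \<ge> 1\<close> by blast
  qed
  show ?thesis using d[of 14] d[of 2] d[of 7] by simp
qed

end
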